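(* Let $\mathcal H$ be an HDML model, $\varphi$ a formula, and $Q_n^f$ the filtration classes defined below. Then for every $n\in\mathbb N$, $Q_n^f$ is finite and $|Q_n^f|\le 2^{|\varphi|\cdot N_n}$, where $N_n=n!\cdot\sum_{k=0}^{n}\frac{2^k}{(n-k)!}$.
   Context: A cubical set consists of pairwise disjoint sets $Q_n$ ($n\in\mathbb N$), $Q=\bigcup_n Q_n$, and for $n\ge1$, $1\le i\le n$, maps $s_i,t_i:Q_n\to Q_{n-1}$ satisfying $\alpha_i\circ\beta_j=\beta_{j-1}\circ\alpha_i$ for $1\le i<j\le n$, $\alpha,\beta\in\{s,t\}$. An HDML model is $\mathcal H=(Q,\bar s,\bar t,l,V)$ with $l:Q_1\to\Sigma$ satisfying $l(s_i(q))=l(t_i(q))$ for $q\in Q_2$, $i\in\{1,2\}$, and valuation $V:Q\to 2^{AP}$. HDML formulas: $\varphi::=p\mid\bot\mid\varphi\to\varphi\mid\langle\mathsf s\rangle\varphi\mid\langle\mathsf t\rangle\varphi$. Satisfaction at $q\in Q_n$: $p$ iff $p\in V(q)$; $\bot$ never; $\to$ classical; $\langle\mathsf s\rangle\psi$ iff some $q'\in Q_{n+1}$ and $1\le i\le n+1$ have $s_i(q')=q$ and $q'\models\psi$; $\langle\mathsf t\rangle\psi$ iff some $1\le i\le n$ has $t_i(q)\models\psi$. $|\varphi|$ is the number of occurrences of $\to$, modalities, atomic propositions and $\bot$ in $\varphi$; $\mathcal C(\varphi)$ is the set of subformulas of $\varphi$. For $q,q'$ of the same dimension, $q\equiv q'$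 iff they satisfy the same formulas of $\mathcal C(\varphi)$. For $q\in Q_0$, $[q]=\{q'\in Q_0:q\equiv q'\}$; for $q\in Q_n$, $n\ge1$, $[q]=\{q'\in Q_n:q\equiv q'$, $t_i(q')\in[t_i(q)]$, $s_i(q')\in[s_i(q)]$ for all $1\le i\le n\}$; $Q_n^f=\{[q]:q\in Q_n\}$. *)

theory Defs
  imports Complex_Main
begin

text \<open>Cubical set: Q n is the set of n-cells; s i, t i are the i-th face maps
  (used on Q n for 1 \<le> i \<le> n, landing in Q (n-1)).\<close>
definition cubical_set :: "(nat \<Rightarrow> 'q set) \<Rightarrow> (nat \<Rightarrow> 'q \<Rightarrow> 'q) \<Rightarrow> (nat \<Rightarrow> 'q \<Rightarrow> 'q) \<Rightarrow> bool" where
  "cubical_set Q s t \<longleftrightarrow>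
     (\<forall>m n. m \<noteq> n \<longrightarrow> Q m \<inter> Q n = {}) \<and>
     (\<forall>n i q. 1 \<le> i \<and> i \<le> n \<and> q \<in> Q n \<longrightarrow> s i q \<in> Q (n - 1) \<and> t i q \<in> Q (n - 1)) \<and>
     (\<forall>n i j q. 1 \<le> i \<and> i < j \<and> j \<le> n \<and> q \<in> Q n \<longrightarrow>
        (\<forall>\<alpha> \<in> {s, t}. \<forall>\<beta> \<in> {s, t}. \<alpha> i (\<beta> j q) = \<beta> (j - 1) (\<alpha> i q)))"

definition hdml_model :: "(nat \<Rightarrow> 'q set) \<Rightarrow> (nat \<Rightarrow> 'q \<Rightarrow> 'q) \<Rightarrow> (nat \<Rightarrow> 'q \<Rightarrow> 'q)
    \<Rightarrow> ('q \<Rightarrow> 'sigma) \<Rightarrow> ('q \<Rightarrow> 'ap set) \<Rightarrow> bool" where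
  "hdml_model Q s t l V \<longleftrightarrow> cubical_set Q s t \<and>
     (\<forall>q \<in> Q 2. \<forall>i \<in> {1, 2}. l (s i q) = l (t i q))"

datatype 'ap hform = Atom 'ap | Bot | Imp "'ap hform" "'ap hform" | DiaS "'ap hform" | DiaT "'ap hform"

fun fsize :: "'ap hform \<Rightarrow> nat" where
  "fsize (Atom p) = 1"
| "fsize Bot = 1"
| "fsize (Imp a b) = 1 + fsize a + fsize b"
| "fsize (DiaS a) = 1 + fsize a"
| "fsize (DiaT a) = 1 + fsize a"

fun subf :: "'ap hform \<Rightarrow> 'ap hform set" where
  "subf (Atom p) = {Atom p}"
| "subf Bot = {Bot}"
| "subf (Imp a b) = insert (Imp a b) (subf a \<union> subf b)"
| "subf (DiaS a) = insert (DiaS a) (subf a)"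
| "subf (DiaT a) = insert (DiaT a) (subf a)"

text \<open>Satisfaction at a cell q of dimension n (meaningful for q \<in> Q n).\<close>
fun sat :: "(nat \<Rightarrow> 'q set) \<Rightarrow> (nat \<Rightarrow> 'q \<Rightarrow> 'q) \<Rightarrow> (nat \<Rightarrow> 'q \<Rightarrow> 'q) \<Rightarrow> ('q \<Rightarrow> 'ap set)
    \<Rightarrow> nat \<Rightarrow> 'q \<Rightarrow> 'ap hform \<Rightarrow> bool" where
  "sat Q s t V n q (Atom p) = (p \<in> V q)"
| "sat Q s t V n q Bot = False"
| "sat Q s t V n q (Imp a b) = (sat Q s t V n q a \<longrightarrow> sat Q s t V n q b)"
| "sat Q s t V n q (DiaS a) =
     (\<exists>q' \<in> Q (Suc n). \<exists>i \<in> {1..Suc n}. s i q' = q \<and> sat Q s t V (Suc n) q' a)"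
| "sat Q s t V n q (DiaT a) = (\<exists>i \<in> {1..n}. sat Q s t V (n - 1) (t i q) a)"

definition hequiv :: "(nat \<Rightarrow> 'q set) \<Rightarrow> (nat \<Rightarrow> 'q \<Rightarrow> 'q) \<Rightarrow> (nat \<Rightarrow> 'q \<Rightarrow> 'q) \<Rightarrow> ('q \<Rightarrow> 'ap set)
    \<Rightarrow> 'ap hform \<Rightarrow> nat \<Rightarrow> 'q \<Rightarrow> 'q \<Rightarrow> bool" where
  "hequiv Q s t V \<phi> n q q' \<longleftrightarrow> (\<forall>\<psi> \<in> subf \<phi>. sat Q s t V n q \<psi> \<longleftrightarrow> sat Q s t V n q' \<psi>)"

fun fclass :: "(nat \<Rightarrow> 'q set) \<Rightarrow> (nat \<Rightarrow> 'q \<Rightarrow> 'q) \<Rightarrow> (nat \<Rightarrow> 'q \<Rightarrow> 'q) \<Rightarrow> ('q \<Rightarrow> 'ap set)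
    \<Rightarrow> 'ap hform \<Rightarrow> nat \<Rightarrow> 'q \<Rightarrow> 'q set" where
  "fclass Q s t V \<phi> 0 q = {q' \<in> Q 0. hequiv Q s t V \<phi> 0 q q'}"
| "fclass Q s t V \<phi> (Suc n) q = {q' \<in> Q (Suc n). hequiv Q s t V \<phi> (Suc n) q q' \<and>
     (\<forall>i \<in> {1..Suc n}. t i q' \<in> fclass Q s t V \<phi> n (t i q) \<and> s i q' \<in> fclass Q s t V \<phi> n (s i q))}"

definition Qf :: "(nat \<Rightarrow> 'q set) \<Rightarrow> (nat \<Rightarrow> 'q \<Rightarrow> 'q) \<Rightarrow> (nat \<Rightarrow> 'q \<Rightarrow> 'q) \<Rightarrow> ('q \<Rightarrow> 'ap set)
    \<Rightarrow> 'ap hform \<Rightarrow> nat \<Rightarrow> 'q set set" where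
  "Qf Q s t V \<phi> n = fclass Q s t V \<phi> n ` Q n"

end

theory Submission
  imports Defs "HOL-Library.FuncSet"
begin

lemma finite_subf: "finite (subf \<phi>)"
  by (induction \<phi>) auto

lemma card_subf_le: "card (subf \<phi>) \<le> fsize \<phi>"
proof (induction \<phi>)
  case (Imp a b)
  have "card (subf (Imp a b)) \<le> Suc (card (subf a \<union> subf b))"
    by (simp add: card_insert_le_m1 card_insert_if)
  also have "card (subf a \<union> subf b) \<le> card (subf a) + card (subf b)" by (rule card_Un_le)
  finally show ?case using Imp by simp
next
  case (DiaS a) then show ?case by (simp add: card_insert_if finite_subf)
next
  case (DiaT a) then show ?case by (simp add: card_insert_if finite_subf)
qed auto

lemma image_factor:
  assumes "\<forall>a\<in>A. \<forall>b\<in>A. key a = key b \<longrightarrow> f a = f b"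
  shows "f ` A = (\<lambda>k. f (inv_into A key k)) ` (key ` A)"
proof -
  have "\<And>a. a \<in> A \<Longrightarrow> f (inv_into A key (key a)) = f a"
    using assms by (metis f_inv_into_f image_eqI inv_into_into)
  then show ?thesis by (auto simp: image_iff)
qed

lemma factor_bound:
  assumes "\<forall>a\<in>A. \<forall>b\<in>A. key a = key b \<longrightarrow> f a = f b" and "key ` A \<subseteq> K" and "finite K"
  shows "finite (f ` A) \<and> card (f ` A) \<le> card K"
proof -
  have e: "f ` A = (\<lambda>k. f (inv_into A key k)) ` (key ` A)" by (rule image_factor[OF assms(1)])
  have fk: "finite (key ` A)" using assms(2,3) finite_subset by blast
  have "card (f ` A) \<le> card (key ` A)" unfolding e by (rule card_image_le[OF fk])
  also have "\<dots> \<le> card K" by (rule card_mono[OF assms(3,2)])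
  finally show ?thesis using e fk by simp
qed

fun NN :: "nat \<Rightarrow> nat" where
  "NN 0 = 1"
| "NN (Suc n) = 1 + 2 * Suc n * NN n"

lemma NN_real: "real (NN n) = fact n * (\<Sum>k = 0..n. 2 ^ k / fact (n - k))"
proof (induction n)
  case 0
  then show ?case by simp
next
  case (Suc n)
  have "(\<Sum>k = 0..Suc n. (2::real) ^ k / fact (Suc n - k))
      = 1 / fact (Suc n) + (\<Sum>k = 0..n. 2 ^ Suc k / fact (Suc n - Suc k))"
    by (subst sum.atLeast0_atMost_Suc_shift) simp
  also have "(\<Sum>k = 0..n. (2::real) ^ Suc k / fact (Suc n - Suc k)) = 2 * (\<Sum>k = 0..n. 2 ^ k / fact (n - k))"
    by (simp add: sum_distrib_left)
  finally have S: "(\<Sum>k = 0..Suc n. (2::real) ^ k / fact (Suc n - k))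
     = 1 / fact (Suc n) + 2 * (\<Sum>k = 0..n. 2 ^ k / fact (n - k))" .
  have "fact (Suc n) * (1 / fact (Suc n) + 2 * (\<Sum>k = 0..n. (2::real) ^ k / fact (n - k)))
     = 1 + 2 * real (Suc n) * (fact n * (\<Sum>k = 0..n. 2 ^ k / fact (n - k)))"
    unfolding fact_Suc of_nat_mult by (simp add: distrib_left)
  then show ?case unfolding S using Suc.IH by (simp add: algebra_simps)
qed

theorem mainTheorem4:
  fixes Q :: "nat \<Rightarrow> 'q set" and s t :: "nat \<Rightarrow> 'q \<Rightarrow> 'q"
    and l :: "'q \<Rightarrow> 'sigma" and V :: "'q \<Rightarrow> 'ap set" and \<phi> :: "'ap hform"
  assumes "hdml_model Q s t l V"
  shows "\<forall>n. finite (Qf Q s t V \<phi> n) \<and>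
    real (card (Qf Q s t V \<phi> n))
      \<le> 2 powr (real (fsize \<phi>) * (fact n * (\<Sum>k = 0..n. 2 ^ k / fact (n - k))))"
proof -
  have cs: "cubical_set Q s t" using assms unfolding hdml_model_def by simp
  have faces: "s i q \<in> Q n \<and> t i q \<in> Q n" if "1 \<le> i" "i \<le> Suc n" "q \<in> Q (Suc n)" for n i q
  proof -
    have "\<forall>n i q. 1 \<le> i \<and> i \<le> n \<and> q \<in> Q n \<longrightarrow> s i q \<in> Q (n - 1) \<and> t i q \<in> Q (n - 1)"
      using cs unfolding cubical_set_def by blast
    from this[rule_format, of i "Suc n" q] show "s i q \<in> Q n \<and> t i q \<in> Q n" using that by simp
  qed
  define T where "T n q = {\<psi> \<in> subf \<phi>. sat Q s t V n q \<psi>}" for n q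
  define m where "m = fsize \<phi>"
  define c where "c = card (subf \<phi>)"
  have cm: "c \<le> m" unfolding c_def m_def by (rule card_subf_le)
  have heq: "hequiv Q s t V \<phi> n q1 q' = hequiv Q s t V \<phi> n q2 q'" if "T n q1 = T n q2" for n q1 q2 q'
  proof -
    have "\<forall>\<psi>\<in>subf \<phi>. sat Q s t V n q1 \<psi> = sat Q s t V n q2 \<psi>"
      using that unfolding T_def set_eq_iff by blast
    then show ?thesis unfolding hequiv_def by auto
  qed
  have TP: "T n q \<in> Pow (subf \<phi>)" for n q unfolding T_def by auto
  have main: "finite (Qf Q s t V \<phi> n) \<and> card (Qf Q s t V \<phi> n) \<le> 2 ^ (m * NN n)" for n
  proof (induction n)
    case 0
    have e0: "fclass Q s t V \<phi> 0 a = fclass Q s t V \<phi> 0 b" if "T 0 a = T 0 b" for a b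
      using heq[OF that] by simp
    have "finite (fclass Q s t V \<phi> 0 ` Q 0) \<and> card (fclass Q s t V \<phi> 0 ` Q 0) \<le> card (Pow (subf \<phi>))"
    proof (rule factor_bound[where key="T 0"])
      show "\<forall>a\<in>Q 0. \<forall>b\<in>Q 0. T 0 a = T 0 b \<longrightarrow> fclass Q s t V \<phi> 0 a = fclass Q s t V \<phi> 0 b"
        using e0 by blast
      show "T 0 ` Q 0 \<subseteq> Pow (subf \<phi>)" using TP by blast
      show "finite (Pow (subf \<phi>))" using finite_subf by blast
    qed
    moreover have "card (Pow (subf \<phi>)) = 2 ^ c" by (simp add: card_Pow finite_subf c_def)
    moreover have "(2::nat) ^ c \<le> 2 ^ (m * NN 0)" using cm by (simp add: power_increasing)
    ultimately show ?case unfolding Qf_def by (metis order_trans)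
  next
    case (Suc n)
    define A where "A = Qf Q s t V \<phi> n"
    define a where "a = card A"
    define K where "K = Pow (subf \<phi>) \<times> (PiE {1..Suc n} (\<lambda>_. A)) \<times> (PiE {1..Suc n} (\<lambda>_. A))"
    define key where "key q = (T (Suc n) q, restrict (\<lambda>i. fclass Q s t V \<phi> n (t i q)) {1..Suc n},
        restrict (\<lambda>i. fclass Q s t V \<phi> n (s i q)) {1..Suc n})" for q
    have fA: "finite A" using Suc unfolding A_def by simp
    have aB: "a \<le> 2 ^ (m * NN n)" using Suc unfolding A_def a_def by simp
    have fK: "finite K" unfolding K_def using fA by (simp add: finite_subf finite_PiE)
    have cK: "card K = 2 ^ c * a ^ Suc n * a ^ Suc n"
      unfolding K_def c_def a_def using fA
      by (simp add: card_cartesian_product card_PiE card_Pow finite_subf)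
    have eq: "\<forall>q1\<in>Q (Suc n). \<forall>q2\<in>Q (Suc n). key q1 = key q2 \<longrightarrow>
        fclass Q s t V \<phi> (Suc n) q1 = fclass Q s t V \<phi> (Suc n) q2"
    proof (intro ballI impI)
      fix q1 q2 assume "q1 \<in> Q (Suc n)" "q2 \<in> Q (Suc n)" "key q1 = key q2"
      then have h1: "T (Suc n) q1 = T (Suc n) q2"
        and k2: "restrict (\<lambda>i. fclass Q s t V \<phi> n (t i q1)) {1..Suc n} = restrict (\<lambda>i. fclass Q s t V \<phi> n (t i q2)) {1..Suc n}"
        and k3: "restrict (\<lambda>i. fclass Q s t V \<phi> n (s i q1)) {1..Suc n} = restrict (\<lambda>i. fclass Q s t V \<phi> n (s i q2)) {1..Suc n}"
        unfolding key_def by simp_all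
      have h2: "\<forall>i\<in>{1..Suc n}. fclass Q s t V \<phi> n (t i q1) = fclass Q s t V \<phi> n (t i q2)
            \<and> fclass Q s t V \<phi> n (s i q1) = fclass Q s t V \<phi> n (s i q2)"
      proof
        fix i assume i: "i \<in> {1..Suc n}"
        show "fclass Q s t V \<phi> n (t i q1) = fclass Q s t V \<phi> n (t i q2)
            \<and> fclass Q s t V \<phi> n (s i q1) = fclass Q s t V \<phi> n (s i q2)"
          using fun_cong[OF k2, of i] fun_cong[OF k3, of i] i by simp
      qed
      show "fclass Q s t V \<phi> (Suc n) q1 = fclass Q s t V \<phi> (Suc n) q2"
        using heq[OF h1] h2 by simp
    qed
    have sub: "key ` Q (Suc n) \<subseteq> K"
    proof
      fix x assume "x \<in> key ` Q (Suc n)"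
      then obtain q where q: "q \<in> Q (Suc n)" "x = key q" by auto
      have "\<forall>i\<in>{1..Suc n}. fclass Q s t V \<phi> n (t i q) \<in> A \<and> fclass Q s t V \<phi> n (s i q) \<in> A"
        using faces[OF _ _ q(1)] unfolding A_def Qf_def by auto
      then show "x \<in> K" unfolding K_def q(2) key_def using TP by auto
    qed
    have fb: "finite (fclass Q s t V \<phi> (Suc n) ` Q (Suc n)) \<and>
        card (fclass Q s t V \<phi> (Suc n) ` Q (Suc n)) \<le> card K"
      by (rule factor_bound[OF eq sub fK])
    have "card K \<le> 2 ^ m * (2 ^ (m * NN n)) ^ Suc n * (2 ^ (m * NN n)) ^ Suc n"
      unfolding cK by (intro mult_mono power_mono power_increasing cm aB) auto
    also have "\<dots> = 2 ^ (m + m * NN n * Suc n + m * NN n * Suc n)"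
      by (simp only: power_mult power_add)
    also have "\<dots> = 2 ^ (m * NN (Suc n))"
      by (rule arg_cong[where f="(^) 2"]) (simp add: algebra_simps)
    finally show ?case using fb unfolding Qf_def by simp
  qed
  show ?thesis
  proof
    fix n
    have "real (card (Qf Q s t V \<phi> n)) \<le> real (2 ^ (m * NN n))" using main[of n] by linarith
    also have "\<dots> = 2 powr (real m * real (NN n))"
      by (simp add: powr_realpow[symmetric] )
    finally show "finite (Qf Q s t V \<phi> n) \<and>
      real (card (Qf Q s t V \<phi> n)) \<le> 2 powr (real (fsize \<phi>) * (fact n * (\<Sum>k = 0..n. 2 ^ k / fact (n - k))))"
      using main[of n] NN_real[of n] unfolding m_def by simp
  qed
qed

end
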